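(* Let $t=\alpha^\mu\beta^\nu$ with $\mu\in\mathbb{Z}_{\ge0}^m$, $\nu\in\mathbb{Z}_{\ge0}^n$. If $t$ has a res-representation, then $t$ has a syl-representation. Moreover, if $\nu$ is non-increasing and $\mathcal{R}$ is a res-representation of $t$, then $(\mathcal{R},F_{\bar c})$ is a syl-representation of $t$, where $c=cs(\mathcal{R})$, $\bar c_j=m-c_j$, and $F_{\bar c}$ is the bottom-left flushed $m\times n$ matrix with column sums $\bar c$.
   Context: For $M\in\{0,1\}^{m\times n}$: $\bar M_{ij}=1-M_{ij}$; $rs(M)=(\sum_j M_{ij})_i$; $cs(M)=(\sum_i M_{ij})_j$; $ars(M)=(i+\sum_j M_{ij})_{i=1..m}$; $acs(M)=(j+\sum_i M_{ij})_{j=1..n}$. $M$ is bottom-left flushed if whenever $M_{ij}=1$, also $M_{i'j'}=1$ for all $i'\ge i$, $j'\le j$. A res-representation of $\alpha^\mu\beta^\nu$ is $\mathcal{R}\in\{0,1\}^{m\times n}$ with $rs(\mathcal{R})=\mu$ and $cs(\bar{\mathcal{R}})=\nu$. $PC(A,B)$ means $\{acs(A)_1,\dots,acs(A)_n,ars(B)_1,\dots,ars(B)_m\}=\{1,\dots,m+n\}$. A syl-representation of $\alpha^\mu\beta^\nu$ is a pair $(\mathcal{S}_1,\mathcal{S}_2)$ in $\{0,1\}^{m\times n}$ with $rs(\mathcal{S}_1)=\mu$, $cs(\mathcal{S}_2)=\nu$, $PC(\mathcal{S}_1,\mathcal{S}_2)$. *)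

theory Defs
  imports Main
begin

text \<open>An m x n 0/1-matrix is a function M :: nat => nat => nat whose entries at
  rows 1..m and columns 1..n lie in {0,1}; entries outside this range are ignored.
  Vectors mu (length m) and nu (length n) are functions nat => nat, indexed from 1.\<close>

definition is01 :: "nat \<Rightarrow> nat \<Rightarrow> (nat \<Rightarrow> nat \<Rightarrow> nat) \<Rightarrow> bool" where
  "is01 m n M \<longleftrightarrow> (\<forall>i\<in>{1..m}. \<forall>j\<in>{1..n}. M i j \<in> {0, 1})"

definition mbar :: "(nat \<Rightarrow> nat \<Rightarrow> nat) \<Rightarrow> nat \<Rightarrow> nat \<Rightarrow> nat" where
  "mbar M i j = 1 - M i j"

definition rs :: "nat \<Rightarrow> (nat \<Rightarrow> nat \<Rightarrow> nat) \<Rightarrow> nat \<Rightarrow> nat" where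
  "rs n M i = (\<Sum>j=1..n. M i j)"

definition cs :: "nat \<Rightarrow> (nat \<Rightarrow> nat \<Rightarrow> nat) \<Rightarrow> nat \<Rightarrow> nat" where
  "cs m M j = (\<Sum>i=1..m. M i j)"

definition ars :: "nat \<Rightarrow> (nat \<Rightarrow> nat \<Rightarrow> nat) \<Rightarrow> nat \<Rightarrow> nat" where
  "ars n M i = i + rs n M i"

definition acs :: "nat \<Rightarrow> (nat \<Rightarrow> nat \<Rightarrow> nat) \<Rightarrow> nat \<Rightarrow> nat" where
  "acs m M j = j + cs m M j"

definition bottom_left_flushed :: "nat \<Rightarrow> nat \<Rightarrow> (nat \<Rightarrow> nat \<Rightarrow> nat) \<Rightarrow> bool" where
  "bottom_left_flushed m n M \<longleftrightarrow>
     (\<forall>i\<in>{1..m}. \<forall>j\<in>{1..n}. M i j = 1 \<longrightarrow>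
        (\<forall>i'\<in>{i..m}. \<forall>j'\<in>{1..j}. M i' j' = 1))"

definition PC :: "nat \<Rightarrow> nat \<Rightarrow> (nat \<Rightarrow> nat \<Rightarrow> nat) \<Rightarrow> (nat \<Rightarrow> nat \<Rightarrow> nat) \<Rightarrow> bool" where
  "PC m n A B \<longleftrightarrow> (acs m A ` {1..n}) \<union> (ars n B ` {1..m}) = {1..m+n}"

definition res_rep :: "nat \<Rightarrow> nat \<Rightarrow> (nat \<Rightarrow> nat) \<Rightarrow> (nat \<Rightarrow> nat) \<Rightarrow> (nat \<Rightarrow> nat \<Rightarrow> nat) \<Rightarrow> bool" where
  "res_rep m n mu nu R \<longleftrightarrow> is01 m n R \<and>
     (\<forall>i\<in>{1..m}. rs n R i = mu i) \<and> (\<forall>j\<in>{1..n}. cs m (mbar R) j = nu j)"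

definition syl_rep :: "nat \<Rightarrow> nat \<Rightarrow> (nat \<Rightarrow> nat) \<Rightarrow> (nat \<Rightarrow> nat)
    \<Rightarrow> (nat \<Rightarrow> nat \<Rightarrow> nat) \<Rightarrow> (nat \<Rightarrow> nat \<Rightarrow> nat) \<Rightarrow> bool" where
  "syl_rep m n mu nu S1 S2 \<longleftrightarrow> is01 m n S1 \<and> is01 m n S2 \<and>
     (\<forall>i\<in>{1..m}. rs n S1 i = mu i) \<and> (\<forall>j\<in>{1..n}. cs m S2 j = nu j) \<and> PC m n S1 S2"

end

theory Submission
  imports Defs
begin


lemma sum_lb:
  fixes f :: "nat \<Rightarrow> nat"
  assumes "\<forall>k\<in>S. f k = 1" "S \<subseteq> {1..N}"
  shows "card S \<le> sum f {1..N}"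
proof -
  have "card S = sum f S" using assms(1) by simp
  also have "\<dots> \<le> sum f {1..N}" by (rule sum_mono2) (use assms(2) in auto)
  finally show ?thesis .
qed

lemma sum_ub:
  fixes f :: "nat \<Rightarrow> nat"
  assumes "\<forall>k\<in>S. f k = 0" "\<forall>k\<in>{1..N}. f k \<le> 1"
  shows "sum f {1..N} \<le> card ({1..N} - S)"
proof -
  have "sum f {1..N} = sum f ({1..N} - S) + sum f ({1..N} \<inter> S)"
    by (metis Int_Diff_Un Int_Diff_disjoint Un_commute finite_Int finite_atLeastAtMost sum.union_disjoint inf_commute finite_Diff add.commute)
  also have "sum f ({1..N} \<inter> S) = 0" using assms(1) by simp
  also have "sum f ({1..N} - S) \<le> card ({1..N} - S) * 1"
    using sum_bounded_above[of "{1..N} - S" f 1] assms(2) by auto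
  finally show ?thesis by simp
qed

lemma sum_le_N:
  fixes f :: "nat \<Rightarrow> nat"
  assumes "\<forall>k\<in>{1..N}. f k \<le> 1"
  shows "sum f {1..N} \<le> N"
  using sum_ub[of "{}" f N] assms by simp

lemma core:
  fixes nu :: "nat \<Rightarrow> nat"
  assumes mono: "\<forall>j\<in>{1..n}. \<forall>j'\<in>{1..n}. j \<le> j' \<longrightarrow> nu j' \<le> nu j"
    and le: "\<forall>j\<in>{1..n}. nu j \<le> m"
    and F01: "is01 m n F"
    and Fc: "\<forall>i\<in>{1..m}. \<forall>j\<in>{1..n}. (F i j = 1) = (m+1 \<le> nu j + i)"
  shows "(\<lambda>j. j + (m - nu j)) ` {1..n} \<union> (\<lambda>i. i + rs n F i) ` {1..m} = {1..m+n}"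
proof -
  define a where "a = (\<lambda>j. j + (m - nu j))"
  define b where "b = (\<lambda>i. i + rs n F i)"
  have F1: "F i j \<le> 1" if "i \<in> {1..m}" "j \<in> {1..n}" for i j
    using F01 that unfolding is01_def by fastforce
  have F0: "F i j = 0" if "i \<in> {1..m}" "j \<in> {1..n}" "F i j \<noteq> 1" for i j
    using F01 that unfolding is01_def by fastforce
  have rsle: "rs n F i \<le> n" if "i \<in> {1..m}" for i
    unfolding rs_def using sum_le_N[of n "F i"] F1 that by auto
  have ainj: "inj_on a {1..n}"
  proof (rule linorder_inj_onI)
    fix x y assume "x < y" "x \<in> {1..n}" "y \<in> {1..n}"
    then have "nu y \<le> nu x" "nu x \<le> m" using mono le by auto
    then show "a x \<noteq> a y" using \<open>x<y\<close> unfolding a_def by auto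
  qed auto
  have binj: "inj_on b {1..m}"
  proof (rule linorder_inj_onI)
    fix x y assume xy: "x < y" "x \<in> {1..m}" "y \<in> {1..m}"
    have "F x j \<le> F y j" if "j \<in> {1..n}" for j
    proof (cases "F x j = 1")
      case True
      then have "m+1 \<le> nu j + x" using Fc xy that by blast
      then have "F y j = 1" using Fc xy that by auto
      then show ?thesis using True by simp
    next
      case False then have "F x j = 0" using F0 xy that by auto
      then show ?thesis by simp
    qed
    then have "rs n F x \<le> rs n F y" unfolding rs_def by (intro sum_mono) auto
    then show "b x \<noteq> b y" using xy unfolding b_def by auto
  qed auto
  have disj: "a j \<noteq> b i" if j: "j \<in> {1..n}" and i: "i \<in> {1..m}" for i j
  proof (cases "F i j = 1")
    case True
    then have h: "m+1 \<le> nu j + i" using Fc i j by blast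
    have "\<forall>k\<in>{1..j}. F i k = 1"
    proof
      fix k assume k: "k \<in> {1..j}"
      then have "nu j \<le> nu k" using mono j by auto
      then show "F i k = 1" using Fc i j k h by auto
    qed
    then have "card {1..j} \<le> rs n F i" unfolding rs_def
      using sum_lb[of "{1..j}" "F i" n] j by auto
    then show ?thesis using h i unfolding a_def b_def by auto
  next
    case False
    then have h: "nu j + i \<le> m" using Fc i j by auto
    have "\<forall>k\<in>{j..n}. F i k = 0"
    proof
      fix k assume k: "k \<in> {j..n}"
      then have "nu k \<le> nu j" using mono j by auto
      then have "F i k \<noteq> 1" using Fc i j k h by auto
      then show "F i k = 0" using F0 i j k by auto
    qed
    then have "rs n F i \<le> card ({1..n} - {j..n})" unfolding rs_def
      using sum_ub[of "{j..n}" "F i" n] F1 i by auto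
    also have "\<dots> \<le> card {1..<j}" by (rule card_mono) auto
    finally show ?thesis using h j unfolding a_def b_def by auto
  qed
  have sub: "a ` {1..n} \<union> b ` {1..m} \<subseteq> {1..m+n}"
    using le rsle unfolding a_def b_def by fastforce
  have "card (a ` {1..n} \<union> b ` {1..m}) = card (a ` {1..n}) + card (b ` {1..m})"
    by (rule card_Un_disjoint) (use disj in auto)
  also have "\<dots> = n + m" using card_image[OF ainj] card_image[OF binj] by simp
  finally have "card (a ` {1..n} \<union> b ` {1..m}) = card {1..m+n}" by simp
  then show ?thesis using card_subset_eq[OF _ sub] unfolding a_def b_def by auto
qed

lemma cs_compl:
  assumes "is01 m n R" "j \<in> {1..n}"
  shows "cs m R j + cs m (mbar R) j = m"
proof -
  have "cs m R j + cs m (mbar R) j = (\<Sum>i=1..m. R i j + mbar R i j)"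
    unfolding cs_def by (simp add: sum.distrib)
  also have "\<dots> = (\<Sum>i=1..m. 1)"
  proof (rule sum.cong)
    fix i assume "i \<in> {1..m}"
    then have "R i j = 0 \<or> R i j = 1" using assms unfolding is01_def by auto
    then show "R i j + mbar R i j = 1" unfolding mbar_def by auto
  qed simp
  finally show ?thesis by simp
qed

lemma part2:
  assumes mono: "\<forall>j\<in>{1..n}. \<forall>j'\<in>{1..n}. j \<le> j' \<longrightarrow> nu j' \<le> nu j"
    and R: "res_rep m n mu nu R"
    and F01: "is01 m n F" and fl: "bottom_left_flushed m n F"
    and Fcs: "\<forall>j\<in>{1..n}. cs m F j = m - cs m R j"
  shows "syl_rep m n mu nu R F"
proof -
  have R01: "is01 m n R" and Rrs: "\<forall>i\<in>{1..m}. rs n R i = mu i"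
    and Rcs: "\<forall>j\<in>{1..n}. cs m (mbar R) j = nu j" using R unfolding res_rep_def by auto
  have csR: "cs m R j + nu j = m" if "j \<in> {1..n}" for j
    using cs_compl[OF R01 that] Rcs that by auto
  have le: "\<forall>j\<in>{1..n}. nu j \<le> m" using csR by fastforce
  have Fnu: "cs m F j = nu j" if "j \<in> {1..n}" for j
    using csR[OF that] Fcs that by auto
  have F1: "F i j \<le> 1" if "i \<in> {1..m}" "j \<in> {1..n}" for i j
    using F01 that unfolding is01_def by fastforce
  have F0: "F i j = 0" if "i \<in> {1..m}" "j \<in> {1..n}" "F i j \<noteq> 1" for i j
    using F01 that unfolding is01_def by fastforce
  have Fc: "\<forall>i\<in>{1..m}. \<forall>j\<in>{1..n}. (F i j = 1) = (m+1 \<le> nu j + i)"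
  proof (intro ballI iffI)
    fix i j assume i: "i \<in> {1..m}" and j: "j \<in> {1..n}"
    {
      assume "F i j = 1"
      then have "\<forall>k\<in>{i..m}. F k j = 1" using fl i j unfolding bottom_left_flushed_def by auto
      then have "card {i..m} \<le> cs m F j" unfolding cs_def
        using sum_lb[of "{i..m}" "\<lambda>k. F k j" m] i by auto
      then show "m+1 \<le> nu j + i" using Fnu[OF j] i by auto
    }
    {
      assume h: "m+1 \<le> nu j + i"
      show "F i j = 1"
      proof (rule ccontr)
        assume "F i j \<noteq> 1"
        have "\<forall>k\<in>{1..i}. F k j = 0"
        proof
          fix k assume k: "k \<in> {1..i}"
          show "F k j = 0"
          proof (rule F0)
            show "k \<in> {1..m}" using k i by auto
            show "j \<in> {1..n}" by (rule j)
            show "F k j \<noteq> 1"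
            proof
              assume "F k j = 1"
              then have "F i j = 1" using fl k i j unfolding bottom_left_flushed_def
                by (meson \<open>k \<in> {1..m}\<close> atLeastAtMost_iff order_refl k)
              then show False using \<open>F i j \<noteq> 1\<close> by simp
            qed
          qed
        qed
        then have "cs m F j \<le> card ({1..m} - {1..i})" unfolding cs_def
          using sum_ub[of "{1..i}" "\<lambda>k. F k j" m] F1 j by auto
        also have "{1..m} - {1..i} = {Suc i..m}" using i by auto
        also have "card {Suc i..m} = m - i" by simp
        finally show False using h Fnu[OF j] i by auto
      qed
    }
  qed
  have core': "(\<lambda>j. j + (m - nu j)) ` {1..n} \<union> (\<lambda>i. i + rs n F i) ` {1..m} = {1..m+n}"
    by (rule core[OF mono le F01 Fc])
  have "acs m R ` {1..n} = (\<lambda>j. j + (m - nu j)) ` {1..n}"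
  proof (rule image_cong)
    fix j assume j: "j \<in> {1..n}"
    have "cs m R j = m - nu j" using csR[OF j] by arith
    then show "acs m R j = j + (m - nu j)" by (simp add: acs_def)
  qed simp
  moreover have "ars n F ` {1..m} = (\<lambda>i. i + rs n F i) ` {1..m}"
    by (simp add: ars_def)
  ultimately have "PC m n R F" unfolding PC_def using core' by simp
  then show ?thesis unfolding syl_rep_def using R01 F01 Rrs Fnu by auto
qed

lemma sort_perm:
  fixes nu :: "nat \<Rightarrow> nat"
  shows "\<exists>\<sigma>. bij_betw \<sigma> {1..n} {1..n} \<and>
     (\<forall>j\<in>{1..n}. \<forall>j'\<in>{1..n}. j \<le> j' \<longrightarrow> nu (\<sigma> j') \<le> nu (\<sigma> j))"
proof -
  define xs where "xs = rev (sort_key nu [1..<Suc n])"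
  have len: "length xs = n" unfolding xs_def by simp
  have dist: "distinct xs" unfolding xs_def by simp
  have set: "set xs = {1..n}" unfolding xs_def by auto
  have srt: "sorted (map nu (sort_key nu [1..<Suc n]))" by (rule sorted_sort_key)
  have "map nu xs = rev (map nu (sort_key nu [1..<Suc n]))" unfolding xs_def by (simp add: rev_map)
  then have sw: "sorted_wrt (\<lambda>x y. y \<le> x) (map nu xs)"
    using srt by (simp add: sorted_wrt_rev)
  define \<sigma> where "\<sigma> = (\<lambda>j. xs ! (j - 1))"
  have b1: "bij_betw (\<lambda>j. j - 1) {1..n} {..<n}"
    by (rule bij_betw_byWitness[where f'=Suc]) auto
  have b2: "bij_betw ((!) xs) {..<n} {1..n}"
    using bij_betw_nth[OF dist] len set by auto
  have "bij_betw \<sigma> {1..n} {1..n}"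
    unfolding \<sigma>_def using bij_betw_trans[OF b1 b2] by (simp add: comp_def)
  moreover have "\<forall>j\<in>{1..n}. \<forall>j'\<in>{1..n}. j \<le> j' \<longrightarrow> nu (\<sigma> j') \<le> nu (\<sigma> j)"
  proof (intro ballI impI)
    fix j j' assume j: "j \<in> {1..n}" and j': "j' \<in> {1..n}" and le: "j \<le> j'"
    show "nu (\<sigma> j') \<le> nu (\<sigma> j)"
    proof (cases "j = j'")
      case False
      then have "j - 1 < j' - 1" using le j j' by auto
      moreover have "j' - 1 < length (map nu xs)" using j' len by auto
      ultimately have "map nu xs ! (j' - 1) \<le> map nu xs ! (j - 1)"
        using sorted_wrt_nth_less[OF sw] by blast
      then show ?thesis using j j' len unfolding \<sigma>_def by auto
    qed simp
  qed
  ultimately show ?thesis by blast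
qed

lemma part1:
  assumes R: "res_rep m n mu nu R"
  shows "\<exists>S1 S2. syl_rep m n mu nu S1 S2"
proof -
  have R01: "is01 m n R" and Rrs: "\<forall>i\<in>{1..m}. rs n R i = mu i"
    and Rcs: "\<forall>j\<in>{1..n}. cs m (mbar R) j = nu j" using R unfolding res_rep_def by auto
  have csR: "cs m R j + nu j = m" if "j \<in> {1..n}" for j
    using cs_compl[OF R01 that] Rcs that by auto
  obtain \<sigma> where bij: "bij_betw \<sigma> {1..n} {1..n}"
    and mono: "\<forall>j\<in>{1..n}. \<forall>j'\<in>{1..n}. j \<le> j' \<longrightarrow> nu (\<sigma> j') \<le> nu (\<sigma> j)"
    using sort_perm by blast
  have sig: "\<sigma> j \<in> {1..n}" if "j \<in> {1..n}" for j using bij that bij_betwE by blast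
  define S1 where "S1 = (\<lambda>i j. R i (\<sigma> j))"
  define S2 where "S2 = (\<lambda>i j. if m+1 \<le> nu j + i then 1 else 0::nat)"
  define F where "F = (\<lambda>i j. S2 i (\<sigma> j))"
  have le: "\<forall>j\<in>{1..n}. nu (\<sigma> j) \<le> m" using csR sig by fastforce
  have le0: "nu j \<le> m" if "j \<in> {1..n}" for j using csR that by fastforce
  have S101: "is01 m n S1" using R01 sig unfolding is01_def S1_def by auto
  have S201: "is01 m n S2" unfolding is01_def S2_def by auto
  have F01: "is01 m n F" unfolding is01_def F_def S2_def by auto
  have Fc: "\<forall>i\<in>{1..m}. \<forall>j\<in>{1..n}. (F i j = 1) = (m+1 \<le> nu (\<sigma> j) + i)"
    unfolding F_def S2_def by auto
  have core': "(\<lambda>j. j + (m - nu (\<sigma> j))) ` {1..n} \<union> (\<lambda>i. i + rs n F i) ` {1..m} = {1..m+n}"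
    by (rule core[OF mono le F01 Fc])
  have rsF: "rs n F i = rs n S2 i" for i
    unfolding rs_def F_def using sum.reindex_bij_betw[OF bij, of "S2 i"] by simp
  have rsS1: "rs n S1 i = rs n R i" for i
    unfolding rs_def S1_def using sum.reindex_bij_betw[OF bij, of "R i"] by simp
  have "acs m S1 ` {1..n} = (\<lambda>j. j + (m - nu (\<sigma> j))) ` {1..n}"
  proof (rule image_cong)
    fix j assume j: "j \<in> {1..n}"
    have "cs m R (\<sigma> j) = m - nu (\<sigma> j)" using csR[OF sig[OF j]] by arith
    then show "acs m S1 j = j + (m - nu (\<sigma> j))" by (simp add: acs_def cs_def S1_def)
  qed simp
  moreover have "ars n S2 ` {1..m} = (\<lambda>i. i + rs n F i) ` {1..m}"
    by (simp add: ars_def rsF)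
  ultimately have PC: "PC m n S1 S2" unfolding PC_def using core' by simp
  have cs2: "cs m S2 j = nu j" if j: "j \<in> {1..n}" for j
  proof -
    have "cs m S2 j = card ({1..m} \<inter> {i. m+1 \<le> nu j + i})"
      unfolding cs_def S2_def by (simp add: sum.If_cases)
    also have "{1..m} \<inter> {i. m+1 \<le> nu j + i} = {m+1-nu j..m}" using le0[OF j] by auto
    finally show ?thesis using le0[OF j] by simp
  qed
  have "syl_rep m n mu nu S1 S2"
    unfolding syl_rep_def using S101 S201 Rrs rsS1 cs2 PC by auto
  then show ?thesis by blast
qed


theorem mainTheorem9:
  fixes m n :: nat and mu nu :: "nat \<Rightarrow> nat"
  shows "((\<exists>R. res_rep m n mu nu R) \<longrightarrow> (\<exists>S1 S2. syl_rep m n mu nu S1 S2))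
    \<and> (\<forall>R F. (\<forall>j\<in>{1..n}. \<forall>j'\<in>{1..n}. j \<le> j' \<longrightarrow> nu j' \<le> nu j)
          \<and> res_rep m n mu nu R
          \<and> is01 m n F \<and> bottom_left_flushed m n F
          \<and> (\<forall>j\<in>{1..n}. cs m F j = m - cs m R j)
        \<longrightarrow> syl_rep m n mu nu R F)"
proof (intro conjI allI impI)
  assume "\<exists>R. res_rep m n mu nu R"
  then obtain R where "res_rep m n mu nu R" by blast
  then show "\<exists>S1 S2. syl_rep m n mu nu S1 S2" by (rule part1)
next
  fix R F
  assume h: "(\<forall>j\<in>{1..n}. \<forall>j'\<in>{1..n}. j \<le> j' \<longrightarrow> nu j' \<le> nu j)
          \<and> res_rep m n mu nu R
          \<and> is01 m n F \<and> bottom_left_flushed m n F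
          \<and> (\<forall>j\<in>{1..n}. cs m F j = m - cs m R j)"
  show "syl_rep m n mu nu R F"
  proof -
    from h have a1: "\<forall>j\<in>{1..n}. \<forall>j'\<in>{1..n}. j \<le> j' \<longrightarrow> nu j' \<le> nu j" by (rule conjunct1)
    from h have "res_rep m n mu nu R \<and> is01 m n F \<and> bottom_left_flushed m n F
          \<and> (\<forall>j\<in>{1..n}. cs m F j = m - cs m R j)" by (rule conjunct2)
    then obtain a2: "res_rep m n mu nu R" and a3: "is01 m n F" and a4: "bottom_left_flushed m n F"
      and a5: "\<forall>j\<in>{1..n}. cs m F j = m - cs m R j" by (elim conjE)
    show ?thesis by (rule part2[OF a1 a2 a3 a4 a5])
  qed
qed

end
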